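(* For all $p,q\ge1$ and every set $X$, the free Burnside monoid $B^I_X(p,q)$ is isomorphic (as an $X$-monoid) to $\mathrm{Rh}_X(B^I_X(p,q))$.
   Context: $B_X(p,q)$ is the free semigroup on $X$ in the variety defined by $x^{p+q}=x^p$, i.e. presented by $\langle X\mid u^{p+q}=u^p\ (u\in X^+)\rangle$; $B^I_X(p,q)$ is obtained by adjoining a new identity $I$, regarded as an $X$-monoid via $X\subseteq B_X(p,q)$. For a monoid $N$ generated by $X$, the Rhodes expansion $\mathrm{Rh}(N)$ is the monoid of finite chains $(n_k<_{\mathcal L}\cdots<_{\mathcal L}n_0=1)$ with product $\sigma\tau=\mathrm{lm}(n_km\le_{\mathcal L}\cdots\le_{\mathcal L}n_1m\le_{\mathcal L}\tau)$ ($m$ the leftmost term of $\tau$, $\mathrm{lm}$ keeping the leftmost element of each block of $\mathcal L$-equivalent terms), and $\mathrm{Rh}_X(N)$ is its submonoid generated by the chains $(x<_{\mathcal L}1)$, $x\in X$; the canonical morphism to $N$ sends a chain to its leftmost term. *)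

theory Defs
  imports "HOL-Algebra.Group"
begin

text \<open>The monoid congruence on words over X generated by u^(p+q) = u^p, u a nonempty word.
  The empty word represents the adjoined identity I.\<close>
inductive burn_eq :: "'x set \<Rightarrow> nat \<Rightarrow> nat \<Rightarrow> 'x list \<Rightarrow> 'x list \<Rightarrow> bool"
  for X :: "'x set" and p q :: nat where
  brefl: "w \<in> lists X \<Longrightarrow> burn_eq X p q w w"
| bsym: "burn_eq X p q v w \<Longrightarrow> burn_eq X p q w v"
| btrans: "burn_eq X p q u v \<Longrightarrow> burn_eq X p q v w \<Longrightarrow> burn_eq X p q u w"
| brel: "u \<in> lists X \<Longrightarrow> u \<noteq> [] \<Longrightarrow> a \<in> lists X \<Longrightarrow> b \<in> lists X \<Longrightarrow>
     burn_eq X p q (a @ concat (replicate (p + q) u) @ b) (a @ concat (replicate p u) @ b)"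

definition bclass :: "'x set \<Rightarrow> nat \<Rightarrow> nat \<Rightarrow> 'x list \<Rightarrow> 'x list set" where
  "bclass X p q w = {v. burn_eq X p q w v}"

definition BI :: "'x set \<Rightarrow> nat \<Rightarrow> nat \<Rightarrow> 'x list set monoid" where
  "BI X p q = \<lparr> carrier = bclass X p q ` lists X,
      mult = (\<lambda>A B. {w. \<exists>a\<in>A. \<exists>b\<in>B. burn_eq X p q (a @ b) w}),
      one = bclass X p q [] \<rparr>"

definition bgen :: "'x set \<Rightarrow> nat \<Rightarrow> nat \<Rightarrow> 'x \<Rightarrow> 'x list set" where
  "bgen X p q x = bclass X p q [x]"

definition L_le :: "('a, 'b) monoid_scheme \<Rightarrow> 'a \<Rightarrow> 'a \<Rightarrow> bool" where
  "L_le M a b \<longleftrightarrow> (\<exists>c\<in>carrier M. a = c \<otimes>\<^bsub>M\<^esub> b)"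

definition L_less :: "('a, 'b) monoid_scheme \<Rightarrow> 'a \<Rightarrow> 'a \<Rightarrow> bool" where
  "L_less M a b \<longleftrightarrow> L_le M a b \<and> \<not> L_le M b a"

definition L_equiv :: "('a, 'b) monoid_scheme \<Rightarrow> 'a \<Rightarrow> 'a \<Rightarrow> bool" where
  "L_equiv M a b \<longleftrightarrow> L_le M a b \<and> L_le M b a"

text \<open>A chain (n_k <_L ... <_L n_0 = 1) is the list [n_k, ..., n_0] (leftmost term first).\<close>
definition rh_chain :: "('a, 'b) monoid_scheme \<Rightarrow> 'a list \<Rightarrow> bool" where
  "rh_chain M cs \<longleftrightarrow> cs \<noteq> [] \<and> set cs \<subseteq> carrier M \<and> last cs = \<one>\<^bsub>M\<^esub>
      \<and> successively (L_less M) cs"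

fun lm :: "('a, 'b) monoid_scheme \<Rightarrow> 'a list \<Rightarrow> 'a list" where
  "lm M [] = []"
| "lm M [x] = [x]"
| "lm M (x # y # zs) = (if L_equiv M x y then lm M (x # zs) else x # lm M (y # zs))"

definition rh_mult :: "('a, 'b) monoid_scheme \<Rightarrow> 'a list \<Rightarrow> 'a list \<Rightarrow> 'a list" where
  "rh_mult M \<sigma> \<tau> = lm M (map (\<lambda>n. n \<otimes>\<^bsub>M\<^esub> hd \<tau>) (butlast \<sigma>) @ \<tau>)"

definition Rh :: "('a, 'b) monoid_scheme \<Rightarrow> 'a list monoid" where
  "Rh M = \<lparr> carrier = {cs. rh_chain M cs}, mult = rh_mult M, one = [\<one>\<^bsub>M\<^esub>] \<rparr>"

inductive_set rh_gen_set :: "('a, 'b) monoid_scheme \<Rightarrow> 'x set \<Rightarrow> ('x \<Rightarrow> 'a) \<Rightarrow> 'a list set"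
  for M X g where
  rg_one: "[\<one>\<^bsub>M\<^esub>] \<in> rh_gen_set M X g"
| rg_gen: "x \<in> X \<Longrightarrow> [g x, \<one>\<^bsub>M\<^esub>] \<in> rh_gen_set M X g"
| rg_mult: "\<sigma> \<in> rh_gen_set M X g \<Longrightarrow> \<tau> \<in> rh_gen_set M X g \<Longrightarrow> rh_mult M \<sigma> \<tau> \<in> rh_gen_set M X g"

definition RhX :: "('a, 'b) monoid_scheme \<Rightarrow> 'x set \<Rightarrow> ('x \<Rightarrow> 'a) \<Rightarrow> 'a list monoid" where
  "RhX M X g = (Rh M) \<lparr> carrier := rh_gen_set M X g \<rparr>"

end

theory Submission
  imports Defs
begin

lemma lm_hd: "\<exists>t. lm M (x # xs) = x # t"
  by (induction xs arbitrary: x) auto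

lemma L_le_refl: "monoid M \<Longrightarrow> a \<in> carrier M \<Longrightarrow> L_le M a a"
  unfolding L_le_def by (metis monoid.l_one monoid.one_closed)

lemma L_le_trans: "monoid M \<Longrightarrow> a \<in> carrier M \<Longrightarrow> b \<in> carrier M \<Longrightarrow> c \<in> carrier M
  \<Longrightarrow> L_le M a b \<Longrightarrow> L_le M b c \<Longrightarrow> L_le M a c"
  unfolding L_le_def by (metis monoid.m_assoc monoid.m_closed)

lemma L_equiv_refl: "monoid M \<Longrightarrow> a \<in> carrier M \<Longrightarrow> L_equiv M a a"
  by (simp add: L_equiv_def L_le_refl)

lemma L_equiv_trans: "monoid M \<Longrightarrow> a \<in> carrier M \<Longrightarrow> b \<in> carrier M \<Longrightarrow> c \<in> carrier M
  \<Longrightarrow> L_equiv M a b \<Longrightarrow> L_equiv M b c \<Longrightarrow> L_equiv M a c"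
  unfolding L_equiv_def by (meson L_le_trans)

lemma L_le_rmult: "monoid M \<Longrightarrow> a \<in> carrier M \<Longrightarrow> b \<in> carrier M \<Longrightarrow> m \<in> carrier M
  \<Longrightarrow> L_le M a b \<Longrightarrow> L_le M (a \<otimes>\<^bsub>M\<^esub> m) (b \<otimes>\<^bsub>M\<^esub> m)"
  unfolding L_le_def by (metis monoid.m_assoc)

lemma L_equiv_rmult: "monoid M \<Longrightarrow> a \<in> carrier M \<Longrightarrow> b \<in> carrier M \<Longrightarrow> m \<in> carrier M
  \<Longrightarrow> L_equiv M a b \<Longrightarrow> L_equiv M (a \<otimes>\<^bsub>M\<^esub> m) (b \<otimes>\<^bsub>M\<^esub> m)"
  unfolding L_equiv_def by (simp add: L_le_rmult)

lemma lm_drop_block: "(\<forall>s\<in>set S. L_equiv M z s) \<Longrightarrow> lm M (z # S @ ys) = lm M (z # ys)"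
  by (induction S) auto

lemma lm_A:
  assumes "monoid M" "z \<in> carrier M" "y \<in> carrier M" "w \<in> carrier M" "L_equiv M y w"
  shows "lm M (z # y # w # r) = lm M (z # y # r)"
proof (cases "L_equiv M z y")
  case True
  then have "L_equiv M z w" using assms L_equiv_trans by metis
  then show ?thesis using True by simp
qed (use assms in simp)

locale lmctx =
  fixes M :: "('a, 'b) monoid_scheme" and f :: "'a \<Rightarrow> 'a"
  assumes mon: "monoid M"
    and fc: "\<And>a. a \<in> carrier M \<Longrightarrow> f a \<in> carrier M"
    and fe: "\<And>a b. a \<in> carrier M \<Longrightarrow> b \<in> carrier M \<Longrightarrow> L_equiv M a b \<Longrightarrow> L_equiv M (f a) (f b)"
begin

lemma lm_B_aux:
  "set (y # zs) \<subseteq> carrier M \<Longrightarrow> z \<in> carrier M \<Longrightarrow>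
   lm M (z # map f (lm M (y # zs)) @ ys) = lm M (z # map f (y # zs) @ ys)"
proof (induction zs arbitrary: y z)
  case Nil
  then show ?case by simp
next
  case (Cons w zs)
  show ?case
  proof (cases "L_equiv M y w")
    case True
    have "lm M (z # map f (lm M (y # w # zs)) @ ys) = lm M (z # map f (lm M (y # zs)) @ ys)"
      using True by simp
    also have "\<dots> = lm M (z # map f (y # zs) @ ys)" using Cons by simp
    also have "\<dots> = lm M (z # map f (y # w # zs) @ ys)"
      using lm_A[OF mon, of z "f y" "f w"] Cons.prems fc fe True by simp
    finally show ?thesis .
  next
    case False
    then have e: "lm M (y # w # zs) = y # lm M (w # zs)" by simp
    show ?thesis
    proof (cases "L_equiv M z (f y)")
      case True
      then show ?thesis using e Cons by simp
    next
      case F2: False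
      then show ?thesis using e Cons fc by simp
    qed
  qed
qed

lemma lm_B:
  "set xs \<subseteq> carrier M \<Longrightarrow> z \<in> carrier M \<Longrightarrow>
   lm M (z # map f (lm M xs) @ ys) = lm M (z # map f xs @ ys)"
proof (cases xs)
  case Nil then show ?thesis by simp
next
  case (Cons y zs)
  assume "set xs \<subseteq> carrier M" "z \<in> carrier M"
  then show ?thesis using Cons lm_B_aux[of y zs z ys] by simp
qed

lemma lm_B':
  assumes "set xs \<subseteq> carrier M"
  shows "lm M (map f (lm M xs) @ ys) = lm M (map f xs @ ys)"
proof (cases xs)
  case Nil then show ?thesis by simp
next
  case (Cons y r)
  obtain t where t: "lm M (y # r) = y # t" using lm_hd[of M y r] by blast
  have fy: "f y \<in> carrier M" using assms Cons fc by simp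
  have rf: "L_equiv M (f y) (f y)" using L_equiv_refl[OF mon fy] .
  have "lm M (f y # map f (lm M (y # r)) @ ys) = lm M (f y # map f (y # r) @ ys)"
    using lm_B[of "y # r" "f y" ys] assms Cons fy by simp
  then show ?thesis using t rf Cons by simp
qed

end

lemma lm_idem: "monoid M \<Longrightarrow> set xs \<subseteq> carrier M \<Longrightarrow> lm M (lm M xs) = lm M xs"
  using lmctx.lm_B'[of M id xs "[]"] by (simp add: lmctx_def)

lemma lm_C_aux: "monoid M \<Longrightarrow> set ys \<subseteq> carrier M \<Longrightarrow> set xs \<subseteq> carrier M \<Longrightarrow> z \<in> carrier M \<Longrightarrow>
  lm M (z # xs @ lm M ys) = lm M (z # xs @ ys)"
proof (induction xs arbitrary: z)
  case Nil
  then show ?case using lmctx.lm_B[of M id ys z "[]"] by (simp add: lmctx_def)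
next
  case (Cons x xs)
  then show ?case by (cases "L_equiv M z x") simp_all
qed

lemma lm_C: "monoid M \<Longrightarrow> set ys \<subseteq> carrier M \<Longrightarrow> set xs \<subseteq> carrier M \<Longrightarrow>
  lm M (xs @ lm M ys) = lm M (xs @ ys)"
  by (cases xs) (simp_all add: lm_C_aux lm_idem)

lemma lm_E: "\<forall>y\<in>set (x # xs). \<not> L_equiv M y e \<Longrightarrow> lm M (x # xs @ [e]) = lm M (x # xs) @ [e]"
  by (induction xs arbitrary: x) auto

section \<open>Burnside congruence\<close>

context
  fixes X :: "'x set" and p q :: nat
begin

lemma burn_eq_lists: "burn_eq X p q u v \<Longrightarrow> u \<in> lists X \<and> v \<in> lists X"
  by (induction rule: burn_eq.induct) auto

lemma burn_eq_congl: "burn_eq X p q u v \<Longrightarrow> c \<in> lists X \<Longrightarrow> burn_eq X p q (c @ u) (c @ v)"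
proof (induction rule: burn_eq.induct)
  case (brel u a b)
  then show ?case using burn_eq.brel[where X=X and p=p and q=q and u=u and a="c @ a" and b=b] by simp
next
  case (brefl w) then show ?case by (intro burn_eq.brefl) simp
qed (auto intro: burn_eq.intros)

lemma burn_eq_congr: "burn_eq X p q u v \<Longrightarrow> d \<in> lists X \<Longrightarrow> burn_eq X p q (u @ d) (v @ d)"
proof (induction rule: burn_eq.induct)
  case (brel u a b)
  then show ?case using burn_eq.brel[where X=X and p=p and q=q and u=u and a=a and b="b @ d"] by simp
next
  case (brefl w) then show ?case by (intro burn_eq.brefl) simp
qed (auto intro: burn_eq.intros)

lemma burn_eq_app: "burn_eq X p q u v \<Longrightarrow> burn_eq X p q u' v' \<Longrightarrow> burn_eq X p q (u @ u') (v @ v')"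
  by (meson burn_eq.btrans burn_eq_congl burn_eq_congr burn_eq_lists)

lemma bclass_eq: "u \<in> lists X \<Longrightarrow> bclass X p q u = bclass X p q v \<longleftrightarrow> burn_eq X p q u v"
  unfolding bclass_def
  by (auto intro: burn_eq.intros)

lemma bclass_eqI: "burn_eq X p q u v \<Longrightarrow> bclass X p q u = bclass X p q v"
  using bclass_eq burn_eq_lists by blast

lemma mult_cls: "a \<in> lists X \<Longrightarrow> b \<in> lists X \<Longrightarrow>
  bclass X p q a \<otimes>\<^bsub>BI X p q\<^esub> bclass X p q b = bclass X p q (a @ b)"
  unfolding BI_def bclass_def
  by (auto intro: burn_eq.intros burn_eq_app)

lemma BI_carrier: "carrier (BI X p q) = bclass X p q ` lists X"
  by (simp add: BI_def)

lemma BI_one: "\<one>\<^bsub>BI X p q\<^esub> = bclass X p q []"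
  by (simp add: BI_def)

lemma BI_monoid: "monoid (BI X p q)"
proof
  fix x y assume "x \<in> carrier (BI X p q)" "y \<in> carrier (BI X p q)"
  then obtain a b where "a \<in> lists X" "b \<in> lists X" "x = bclass X p q a" "y = bclass X p q b"
    by (auto simp: BI_carrier)
  then show "x \<otimes>\<^bsub>BI X p q\<^esub> y \<in> carrier (BI X p q)"
    by (simp add: BI_carrier mult_cls)
next
  fix x y z assume "x \<in> carrier (BI X p q)" "y \<in> carrier (BI X p q)" "z \<in> carrier (BI X p q)"
  then obtain a b c where "a \<in> lists X" "b \<in> lists X" "c \<in> lists X"
    "x = bclass X p q a" "y = bclass X p q b" "z = bclass X p q c"
    by (auto simp: BI_carrier)
  then show "x \<otimes>\<^bsub>BI X p q\<^esub> y \<otimes>\<^bsub>BI X p q\<^esub> z = x \<otimes>\<^bsub>BI X p q\<^esub> (y \<otimes>\<^bsub>BI X p q\<^esub> z)"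
    by (simp add: mult_cls)
next
  show "\<one>\<^bsub>BI X p q\<^esub> \<in> carrier (BI X p q)" by (auto simp: BI_carrier BI_one)
next
  fix x assume "x \<in> carrier (BI X p q)"
  then obtain a where "a \<in> lists X" "x = bclass X p q a" by (auto simp: BI_carrier)
  then show "\<one>\<^bsub>BI X p q\<^esub> \<otimes>\<^bsub>BI X p q\<^esub> x = x"
    using mult_cls[of a "[]"] mult_cls[of "[]" a] by (simp add: BI_one)
next
  fix x assume "x \<in> carrier (BI X p q)"
  then obtain a where "a \<in> lists X" "x = bclass X p q a" by (auto simp: BI_carrier)
  then show "x \<otimes>\<^bsub>BI X p q\<^esub> \<one>\<^bsub>BI X p q\<^esub> = x"
    using mult_cls[of a "[]"] mult_cls[of "[]" a] by (simp add: BI_one)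
qed

lemma burn_eq_nil: "burn_eq X p q u v \<Longrightarrow> 1 \<le> p \<Longrightarrow> (u = []) = (v = [])"
  by (induction rule: burn_eq.induct) auto

end

fun sufs :: "'a list \<Rightarrow> 'a list list" where
  "sufs [] = [[]]"
| "sufs (x # w) = (x # w) # sufs w"

fun nes :: "'a list \<Rightarrow> 'a list list" where
  "nes [] = []"
| "nes (x # w) = (x # w) # nes w"

lemma sufs_nes: "sufs w = nes w @ [[]]"
  by (induction w) auto

lemma sufs_app: "sufs (a @ b) = map (\<lambda>s. s @ b) (nes a) @ sufs b"
  by (induction a) auto

lemma sufs_hd: "sufs w = w # tl (sufs w)"
  by (cases w) auto

lemma nes_suffix: "s \<in> set (nes w) \<Longrightarrow> \<exists>t. w = t @ s"
  by (induction w) (auto simp: Cons_eq_append_conv)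

lemma nes_nonempty: "s \<in> set (nes w) \<Longrightarrow> s \<noteq> []"
  by (induction w) auto

lemma sufs_suffix: "s \<in> set (sufs w) \<Longrightarrow> \<exists>t. w = t @ s"
  by (induction w) (auto simp: Cons_eq_append_conv)

section \<open>The map psi\<close>

context
  fixes X :: "'x set" and p q :: nat
  assumes p1: "1 \<le> p" and q1: "1 \<le> q"
begin

abbreviation "cls \<equiv> bclass X p q"
abbreviation "B \<equiv> BI X p q"

definition psi :: "'x list \<Rightarrow> 'x list set list" where
  "psi w = lm B (map cls (sufs w))"

lemma suffix_lists: "w \<in> lists X \<Longrightarrow> w = t @ s \<Longrightarrow> s \<in> lists X"
  by simp

lemma sufs_lists: "w \<in> lists X \<Longrightarrow> set (map cls (sufs w)) \<subseteq> carrier B"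
  using sufs_suffix by (fastforce simp: BI_carrier)

lemma nes_lists: "w \<in> lists X \<Longrightarrow> set (map cls (nes w)) \<subseteq> carrier B"
  using nes_suffix by (fastforce simp: BI_carrier)

lemma cls_carrier: "w \<in> lists X \<Longrightarrow> cls w \<in> carrier B"
  by (simp add: BI_carrier)

lemma notone: "s \<in> lists X \<Longrightarrow> s \<noteq> [] \<Longrightarrow> \<not> L_equiv B (cls s) (cls [])"
proof
  assume s: "s \<in> lists X" "s \<noteq> []" and "L_equiv B (cls s) (cls [])"
  then obtain c where c: "c \<in> carrier B" "cls [] = c \<otimes>\<^bsub>B\<^esub> cls s"
    unfolding L_equiv_def L_le_def by blast
  then obtain c' where "c' \<in> lists X" "c = cls c'" by (auto simp: BI_carrier)
  then have "cls [] = cls (c' @ s)" using c s mult_cls[where X=X and p=p and q=q] by metis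
  then have "burn_eq X p q [] (c' @ s)" using bclass_eq[where X=X and p=p and q=q and u="[]"] by simp
  then show False using burn_eq_nil[OF _ p1] s by fastforce
qed

lemma psi_split: "w \<in> lists X \<Longrightarrow> psi w = lm B (map cls (nes w)) @ [cls []]"
proof (cases w)
  case Nil then show ?thesis by (simp add: psi_def)
next
  case (Cons x w')
  assume w: "w \<in> lists X"
  have ne: "\<forall>y\<in>set (map cls (nes w)). \<not> L_equiv B y (cls [])"
  proof
    fix y assume "y \<in> set (map cls (nes w))"
    then obtain s where s: "s \<in> set (nes w)" "y = cls s" by auto
    then obtain t where "w = t @ s" using nes_suffix by blast
    then have "s \<in> lists X" using w by simp
    then show "\<not> L_equiv B y (cls [])" using notone nes_nonempty s by blast
  qed
  have m: "map cls (nes w) = cls w # map cls (nes w')" using Cons by simp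
  have "psi w = lm B (map cls (nes w) @ [cls []])" by (simp add: psi_def sufs_nes)
  also have "\<dots> = lm B (cls w # map cls (nes w') @ [cls []])" using m by simp
  also have "\<dots> = lm B (cls w # map cls (nes w')) @ [cls []]"
    by (rule lm_E) (use ne m in simp)
  finally show ?thesis using m by simp
qed

lemma psi_hd: "hd (psi w) = cls w"
proof -
  obtain t where "lm B (cls w # map cls (tl (sufs w))) = cls w # t" using lm_hd[of B] by blast
  then show ?thesis unfolding psi_def by (subst sufs_hd) simp
qed

lemma psi_app:
  assumes a: "a \<in> lists X" and b: "b \<in> lists X"
  shows "rh_mult B (psi a) (psi b) = psi (a @ b)"
proof -
  define f where "f = (\<lambda>n. n \<otimes>\<^bsub>B\<^esub> cls b)"
  have ctx: "lmctx B f"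
    unfolding lmctx_def f_def using BI_monoid cls_carrier[OF b]
    by (auto intro: monoid.m_closed L_equiv_rmult)
  have "rh_mult B (psi a) (psi b) = lm B (map f (lm B (map cls (nes a))) @ psi b)"
    unfolding rh_mult_def f_def psi_hd using psi_split[OF a] by simp
  also have "\<dots> = lm B (map f (map cls (nes a)) @ psi b)"
    using lmctx.lm_B'[OF ctx nes_lists[OF a]] .
  also have "\<dots> = lm B (map f (map cls (nes a)) @ map cls (sufs b))"
    unfolding psi_def
    by (rule lm_C[OF BI_monoid sufs_lists[OF b]])
      (use ctx nes_lists[OF a] in \<open>auto simp: lmctx_def\<close>)
  also have "map f (map cls (nes a)) = map cls (map (\<lambda>s. s @ b) (nes a))"
  proof -
    have "\<forall>s\<in>set (nes a). f (cls s) = cls (s @ b)"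
    proof
      fix s assume "s \<in> set (nes a)"
      then obtain t where "a = t @ s" using nes_suffix by blast
      then have "s \<in> lists X" using a by simp
      then show "f (cls s) = cls (s @ b)" unfolding f_def using mult_cls[where X=X and p=p and q=q] b by blast
    qed
    then show ?thesis by simp
  qed
  finally show ?thesis by (simp add: psi_def sufs_app)
qed

lemma psi_rel:
  assumes U: "U \<in> lists X" "U \<noteq> []" and b: "b \<in> lists X"
  shows "psi (concat (replicate (p + q) U) @ b) = psi (concat (replicate p U) @ b)"
proof -
  define V where "V = concat (replicate q U)"
  define R where "R = concat (replicate p U) @ b"
  have VR: "concat (replicate (p + q) U) @ b = V @ R"
    unfolding V_def R_def by (simp add: replicate_add[of q p, simplified add.commute[of q p]])
  have Vl: "V \<in> lists X" and Rl: "R \<in> lists X" using U b by (auto simp: V_def R_def)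
  have "V \<noteq> []" using U q1 by (cases q) (auto simp: V_def)
  then obtain x V' where V': "V = x # V'" by (cases V) auto
  have eqc: "cls (V @ R) = cls R"
    using bclass_eqI[OF burn_eq.brel[OF U(1) U(2), of "[]" b p q]] U b VR R_def by simp
  have Rc: "cls R \<in> carrier B" using cls_carrier Rl by blast
  have blk: "\<forall>y\<in>set (map cls (map (\<lambda>s. s @ R) (nes V'))). L_equiv B (cls R) y"
  proof
    fix y assume "y \<in> set (map cls (map (\<lambda>s. s @ R) (nes V')))"
    then obtain s where s: "s \<in> set (nes V')" "y = cls (s @ R)" by auto
    then obtain t where t: "V' = t @ s" using nes_suffix by blast
    have sl: "s \<in> lists X" and tl: "x # t \<in> lists X" using Vl V' t by auto
    have "cls (s @ R) = cls s \<otimes>\<^bsub>B\<^esub> cls R" using mult_cls[where X=X and p=p and q=q] sl Rl by metis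
    then have 1: "L_le B y (cls R)" unfolding L_le_def using s cls_carrier[OF sl] by blast
    have "cls R = cls ((x # t) @ (s @ R))" using eqc V' t by simp
    also have "\<dots> = cls (x # t) \<otimes>\<^bsub>B\<^esub> cls (s @ R)"
      using mult_cls[where X=X and p=p and q=q] sl Rl tl by (metis append_in_lists_conv)
    finally have 2: "L_le B (cls R) y" unfolding L_le_def using s cls_carrier[OF tl] by blast
    show "L_equiv B (cls R) y" using 1 2 by (simp add: L_equiv_def)
  qed
  have "psi (V @ R) = lm B (cls (V @ R) # map cls (map (\<lambda>s. s @ R) (nes V')) @ map cls (sufs R))"
    unfolding psi_def sufs_app using V' by simp
  also have "\<dots> = lm B (cls R # map cls (sufs R))"
    using lm_drop_block[OF blk] eqc by simp
  also have "\<dots> = lm B (cls R # cls R # map cls (tl (sufs R)))"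
    by (subst sufs_hd) simp
  also have "\<dots> = lm B (cls R # map cls (tl (sufs R)))"
    using L_equiv_refl[OF BI_monoid Rc] by simp
  also have "\<dots> = psi R" unfolding psi_def by (subst (2) sufs_hd) simp
  finally show ?thesis using VR R_def by simp
qed

lemma psi_wd: "burn_eq X p q w w' \<Longrightarrow> psi w = psi w'"
proof (induction rule: burn_eq.induct)
  case (brel u a b)
  have l1: "concat (replicate (p + q) u) @ b \<in> lists X" and l2: "concat (replicate p u) @ b \<in> lists X"
    using brel by auto
  have "psi (a @ concat (replicate (p + q) u) @ b) = rh_mult B (psi a) (psi (concat (replicate (p + q) u) @ b))"
    using psi_app brel l1 by metis
  also have "\<dots> = rh_mult B (psi a) (psi (concat (replicate p u) @ b))"
    using psi_rel brel by metis
  also have "\<dots> = psi (a @ concat (replicate p u) @ b)"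
    using psi_app brel l2 by metis
  finally show ?case .
qed auto

lemma psi_single: "x \<in> X \<Longrightarrow> psi [x] = [bgen X p q x, \<one>\<^bsub>B\<^esub>]"
proof -
  assume "x \<in> X"
  then have xl: "[x] \<in> lists X" by simp
  have "\<not> L_equiv B (cls [x]) (cls [])" using notone xl by blast
  then show "psi [x] = [bgen X p q x, \<one>\<^bsub>B\<^esub>]" by (simp add: psi_def bgen_def BI_one)
qed

lemma psi_gen: "w \<in> lists X \<Longrightarrow> psi w \<in> rh_gen_set B X (bgen X p q)"
proof (induction w)
  case Nil
  then show ?case using rh_gen_set.rg_one[of B X "bgen X p q"] by (simp add: psi_def BI_one)
next
  case (Cons x w)
  have xl: "[x] \<in> lists X" and wl: "w \<in> lists X" using Cons by auto
  have "\<not> L_equiv B (cls [x]) (cls [])" using notone xl by blast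
  then have "psi [x] = [bgen X p q x, \<one>\<^bsub>B\<^esub>]" by (simp add: psi_def bgen_def BI_one)
  then have "psi [x] \<in> rh_gen_set B X (bgen X p q)" using rh_gen_set.rg_gen Cons by fastforce
  then have "rh_mult B (psi [x]) (psi w) \<in> rh_gen_set B X (bgen X p q)"
    using rh_gen_set.rg_mult Cons wl by blast
  then show ?case using psi_app[OF xl wl] by simp
qed

lemma gen_psi: "\<sigma> \<in> rh_gen_set B X (bgen X p q) \<Longrightarrow> \<exists>w\<in>lists X. \<sigma> = psi w"
proof (induction rule: rh_gen_set.induct)
  case rg_one
  then show ?case by (intro bexI[of _ "[]"]) (simp_all add: psi_def BI_one)
next
  case (rg_gen x)
  have xl: "[x] \<in> lists X" using rg_gen by auto
  have "\<not> L_equiv B (cls [x]) (cls [])" using notone xl by blast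
  then have "psi [x] = [bgen X p q x, \<one>\<^bsub>B\<^esub>]" by (simp add: psi_def bgen_def BI_one)
  then show ?case using xl by metis
next
  case (rg_mult \<sigma> \<tau>)
  then obtain a b where "a \<in> lists X" "b \<in> lists X" "\<sigma> = psi a" "\<tau> = psi b" by blast
  then show ?case using psi_app by (metis append_in_lists_conv)
qed

end

theorem lemma9p1:
  fixes X :: "'x set" and p q :: nat
  assumes "1 \<le> p" and "1 \<le> q"
  shows "\<exists>\<phi>. \<phi> \<in> iso (BI X p q) (RhX (BI X p q) X (bgen X p q))
           \<and> (\<forall>x\<in>X. \<phi> (bgen X p q x) = [bgen X p q x, \<one>\<^bsub>BI X p q\<^esub>])"
proof -
  define \<phi> where "\<phi> = (\<lambda>A. psi X p q (SOME w. w \<in> lists X \<and> A = bclass X p q w))"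
  have phi: "\<phi> (bclass X p q w) = psi X p q w" if w: "w \<in> lists X" for w
  proof -
    have "\<exists>w'. w' \<in> lists X \<and> bclass X p q w = bclass X p q w'" using w by blast
    then have s: "(SOME w'. w' \<in> lists X \<and> bclass X p q w = bclass X p q w') \<in> lists X \<and>
        bclass X p q w = bclass X p q (SOME w'. w' \<in> lists X \<and> bclass X p q w = bclass X p q w')"
      by (rule someI_ex)
    then have "burn_eq X p q w (SOME w'. w' \<in> lists X \<and> bclass X p q w = bclass X p q w')"
      using bclass_eq[where X=X and p=p and q=q] w by blast
    then show ?thesis unfolding \<phi>_def using psi_wd[OF assms] by metis
  qed
  have cR: "carrier (RhX (BI X p q) X (bgen X p q)) = rh_gen_set (BI X p q) X (bgen X p q)"
    by (simp add: RhX_def Rh_def)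
  have mR: "mult (RhX (BI X p q) X (bgen X p q)) = rh_mult (BI X p q)"
    by (simp add: RhX_def Rh_def)
  have hom: "\<phi> \<in> hom (BI X p q) (RhX (BI X p q) X (bgen X p q))"
  proof (rule homI)
    fix A assume "A \<in> carrier (BI X p q)"
    then obtain w where "w \<in> lists X" "A = bclass X p q w" by (auto simp: BI_carrier)
    then show "\<phi> A \<in> carrier (RhX (BI X p q) X (bgen X p q))" using phi psi_gen[OF assms] cR by simp
  next
    fix A C assume "A \<in> carrier (BI X p q)" "C \<in> carrier (BI X p q)"
    then obtain a c where "a \<in> lists X" "A = bclass X p q a" "c \<in> lists X" "C = bclass X p q c"
      by (auto simp: BI_carrier)
    then show "\<phi> (A \<otimes>\<^bsub>BI X p q\<^esub> C) = \<phi> A \<otimes>\<^bsub>RhX (BI X p q) X (bgen X p q)\<^esub> \<phi> C"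
      using phi psi_app[OF assms] mult_cls[where X=X and p=p and q=q] mR
      by (metis append_in_lists_conv)
  qed
  have inj: "inj_on \<phi> (carrier (BI X p q))"
  proof (rule inj_onI)
    fix A C assume "A \<in> carrier (BI X p q)" "C \<in> carrier (BI X p q)" "\<phi> A = \<phi> C"
    then obtain a c where ac: "a \<in> lists X" "A = bclass X p q a" "c \<in> lists X" "C = bclass X p q c"
      by (auto simp: BI_carrier)
    then have "psi X p q a = psi X p q c" using \<open>\<phi> A = \<phi> C\<close> phi by metis
    then show "A = C" using psi_hd[OF assms] ac by metis
  qed
  have img: "\<phi> ` carrier (BI X p q) = carrier (RhX (BI X p q) X (bgen X p q))"
  proof
    show "\<phi> ` carrier (BI X p q) \<subseteq> carrier (RhX (BI X p q) X (bgen X p q))"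
      using hom by (auto simp: hom_def)
  next
    show "carrier (RhX (BI X p q) X (bgen X p q)) \<subseteq> \<phi> ` carrier (BI X p q)"
    proof
      fix \<sigma> assume "\<sigma> \<in> carrier (RhX (BI X p q) X (bgen X p q))"
      then obtain w where "w \<in> lists X" "\<sigma> = psi X p q w" using gen_psi[OF assms] cR by auto
      then have "\<sigma> = \<phi> (bclass X p q w)" "bclass X p q w \<in> carrier (BI X p q)"
        using phi by (auto simp: BI_carrier)
      then show "\<sigma> \<in> \<phi> ` carrier (BI X p q)" by blast
    qed
  qed
  have gens: "\<forall>x\<in>X. \<phi> (bgen X p q x) = [bgen X p q x, \<one>\<^bsub>BI X p q\<^esub>]"
  proof
    fix x assume x: "x \<in> X"
    then have xl: "[x] \<in> lists X" by simp
    show "\<phi> (bgen X p q x) = [bgen X p q x, \<one>\<^bsub>BI X p q\<^esub>]"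
      using phi[OF xl] psi_single[OF assms x] by (simp add: bgen_def)
  qed
  show ?thesis using hom inj img gens unfolding iso_def bij_betw_def by blast
qed

end
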